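(* The Petersen graph is not B-factorizable; moreover, there is $v\in\overline{\mathbf N}(PM(V))\cap\mathrm{problem}(V)$ with $E(v)$ equal to the Petersen graph and $2v\in\mathbf N(PM(V))$, which is an additional generator.
   Context: Let $V$ be a finite set with $|V|$ even (here $|V|=10$, the vertex set of the Petersen graph). $K=\binom{V}{2}$ is the set of 2-element subsets of $V$. An equal partition of $V$ is an unordered pair $\{H,A\}$ of disjoint subsets with $H\cup A=V$ and $|H|=|A|=|V|/2$; $C=C(V)$ is the set of equal partitions. For $c=\{H,A\}\in C$, $B_c$ is the complete bipartite graph with parts $H$ and $A$. Vectors live in $\mathbb N^{K\cup C}$ with $\mathbb N=\{0,1,2,\dots\}$; $v|_K$ denotes the restriction to coordinates in $K$. For $E\subseteq K$, $\chi_E\in\{0,1\}^K$ is its indicator vector; $\chi_K$ is the all-ones vector on $K$. For $E\subseteq K$ and $c\in C$, $\chi_{E,c}\in\mathbb N^{K\cup C}$ has $K$-components $\chi_E$ and $C$-components equal to the indicator of $c$. $PM(V)=\{\chi_{q,c}: c\in C,\ q\text{ a perfect matching of }B_c\}$. For $\mathcal M\subseteq\mathbb N^{K\cup C}$, $\mathbf N(\mathcal M)$ is the set of finite nonnegative integer combinations of elements of $\mathcal M$, and $\overline{\mathbf N}(\mathcal M)=\{v\in\mathbb N^{K\cup C}: kv\in\mathbf N(\mathcal M)\text{ for some integer }k\ge1\}$. For $v\in\mathbb N^{K\cup C}$, $E(v)=\{e\in K: v(e)=1\}$. $\mathrm{problem}(V)$ is the set of $v\in\mathbb N^{K\cup C}$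 such that $v|_K\le\chi_K$, the graph $(V,E(v))$ is regular, and $\frac{|V|}{2}\sum_{c\in C}v(c)=\sum_{e\in K}v(e)$. A regular graph $G=(V,E)$ is B-factorizable if every $v\in\overline{\mathbf N}(PM(V))$ with $v|_K=\chi_E$ belongs to $\mathbf N(PM(V))$. The monoid $\overline{\mathbf N}(PM(V))$ is pointed, hence has a unique inclusion-minimal generating set (as a monoid), its Hilbert basis. An additional generator is an element of the Hilbert basis of $\overline{\mathbf N}(PM(V))$ that does not belong to $PM(V)$. *)

theory Defs
  imports Main
begin

text \<open>Vectors in N^(K \<union> C): coordinates are indexed by the sum type; Inl e for an
  edge e \<in> K, Inr c for an equal partition c \<in> C (c = {H, A} as an unordered pair).\<close>

type_synonym 'a vect = "('a set + 'a set set) \<Rightarrow> nat"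

definition Kset :: "'a set \<Rightarrow> 'a set set" where
  "Kset V = {e. e \<subseteq> V \<and> card e = 2}"

definition Cset :: "'a set \<Rightarrow> 'a set set set" where
  "Cset V = {{H, A} | H A. H \<inter> A = {} \<and> H \<union> A = V
              \<and> card H = card V div 2 \<and> card A = card V div 2}"

definition vecs :: "'a set \<Rightarrow> 'a vect set" where
  "vecs V = {v. \<forall>x. x \<notin> Inl ` Kset V \<union> Inr ` Cset V \<longrightarrow> v x = 0}"

definition chiEc :: "'a set set \<Rightarrow> 'a set set \<Rightarrow> 'a vect" where
  "chiEc E c = (\<lambda>x. case x of Inl e \<Rightarrow> (if e \<in> E then 1 else 0)
                             | Inr d \<Rightarrow> (if d = c then 1 else 0))"

definition B_edges :: "'a set set \<Rightarrow> 'a set set" where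
  "B_edges c = {{h, a} | h a. \<exists>H A. c = {H, A} \<and> h \<in> H \<and> a \<in> A}"

definition perfect_matching :: "'a set \<Rightarrow> 'a set set \<Rightarrow> 'a set set \<Rightarrow> bool" where
  "perfect_matching V F q \<longleftrightarrow> q \<subseteq> F \<and> (\<forall>u\<in>V. \<exists>!e. e \<in> q \<and> u \<in> e)"

definition PM :: "'a set \<Rightarrow> 'a vect set" where
  "PM V = {chiEc q c | c q. c \<in> Cset V \<and> perfect_matching V (B_edges c) q}"

inductive_set Ncomb :: "'a vect set \<Rightarrow> 'a vect set" for M where
  zero: "(\<lambda>_. 0) \<in> Ncomb M"
| add: "x \<in> M \<Longrightarrow> y \<in> Ncomb M \<Longrightarrow> (\<lambda>i. x i + y i) \<in> Ncomb M"

definition Nbar :: "'a set \<Rightarrow> 'a vect set \<Rightarrow> 'a vect set" where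
  "Nbar V M = {v \<in> vecs V. \<exists>k::nat. k \<ge> 1 \<and> (\<lambda>i. k * v i) \<in> Ncomb M}"

definition Eset :: "'a set \<Rightarrow> 'a vect \<Rightarrow> 'a set set" where
  "Eset V v = {e \<in> Kset V. v (Inl e) = 1}"

definition regular_graph :: "'a set \<Rightarrow> 'a set set \<Rightarrow> bool" where
  "regular_graph V E \<longleftrightarrow> (\<exists>d. \<forall>u\<in>V. card {e \<in> E. u \<in> e} = d)"

definition problem :: "'a set \<Rightarrow> 'a vect set" where
  "problem V = {v \<in> vecs V. (\<forall>e\<in>Kset V. v (Inl e) \<le> 1)
      \<and> regular_graph V (Eset V v)
      \<and> (card V div 2) * (\<Sum>c\<in>Cset V. v (Inr c)) = (\<Sum>e\<in>Kset V. v (Inl e))}"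

definition B_factorizable :: "'a set \<Rightarrow> 'a set set \<Rightarrow> bool" where
  "B_factorizable V E \<longleftrightarrow>
     (\<forall>v \<in> Nbar V (PM V). (\<forall>e\<in>Kset V. v (Inl e) = (if e \<in> E then 1 else 0))
        \<longrightarrow> v \<in> Ncomb (PM V))"

definition min_generating_set :: "'a vect set \<Rightarrow> 'a vect set \<Rightarrow> bool" where
  "min_generating_set M H \<longleftrightarrow> H \<subseteq> M \<and> Ncomb H = M \<and> (\<forall>H'. H' \<subset> H \<longrightarrow> Ncomb H' \<noteq> M)"

text \<open>v is an element of the Hilbert basis (the unique inclusion-minimal generating set)
  of Nbar(PM V), and not in PM V.\<close>
definition additional_generator :: "'a set \<Rightarrow> 'a vect \<Rightarrow> bool" where
  "additional_generator V v \<longleftrightarrow>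
     (\<exists>H. min_generating_set (Nbar V (PM V)) H)
     \<and> (\<forall>H. min_generating_set (Nbar V (PM V)) H \<longrightarrow> v \<in> H)
     \<and> v \<notin> PM V"

text \<open>Petersen graph as the Kneser graph K(5,2).\<close>
definition petersenV :: "nat set set" where
  "petersenV = {S. S \<subseteq> {0..<5} \<and> card S = 2}"

definition petersenE :: "nat set set set" where
  "petersenE = {{S, T} | S T. S \<in> petersenV \<and> T \<in> petersenV \<and> S \<inter> T = {}}"

end

theory Submission
  imports Defs
begin


definition PV :: "nat set set" where
 "PV = {{0,1},{0,2},{0,3},{0,4},{1,2},{1,3},{1,4},{2,3},{2,4},{3,4}}"

lemma lt5: "(x::nat) < 5 \<Longrightarrow> x = 0 \<or> x = 1 \<or> x = 2 \<or> x = 3 \<or> x = 4" by auto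

lemma petersenV_eq: "petersenV = PV"
proof
  show "petersenV \<subseteq> PV"
  proof
    fix S assume "S \<in> petersenV"
    then have S: "S \<subseteq> {0..<5}" "card S = 2" by (auto simp: petersenV_def)
    then obtain x y where xy: "S = {x,y}" "x \<noteq> y" by (meson card_2_iff)
    with S have "x < 5" "y < 5" by auto
    with xy show "S \<in> PV" unfolding PV_def
      apply (elim lt5[elim_format] disjE)
      by (simp_all add: doubleton_eq_iff)
  qed
  show "PV \<subseteq> petersenV" by (auto simp: PV_def petersenV_def)
qed


definition PE :: "nat set set set" where
 "PE = {{{0,1},{2,3}},{{0,1},{2,4}},{{0,1},{3,4}},
        {{0,2},{1,3}},{{0,2},{1,4}},{{0,2},{3,4}},
        {{0,3},{1,2}},{{0,3},{1,4}},{{0,3},{2,4}},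
        {{0,4},{1,2}},{{0,4},{1,3}},{{0,4},{2,3}},
        {{1,2},{3,4}},{{1,3},{2,4}},{{1,4},{2,3}}}"

lemma inPE: "S \<in> PV \<Longrightarrow> T \<in> PV \<Longrightarrow> S \<inter> T = {} \<Longrightarrow> {S,T} \<in> petersenE"
  unfolding petersenE_def petersenV_eq by blast

lemma petersenE_eq: "petersenE = PE"
proof
  show "petersenE \<subseteq> PE"
  proof
    fix e assume "e \<in> petersenE"
    then obtain S T where e: "e = {S,T}" "S \<in> PV" "T \<in> PV" "S \<inter> T = {}"
      by (auto simp: petersenE_def petersenV_eq)
    then show "e \<in> PE" unfolding PV_def PE_def
      apply (simp only: insert_iff empty_iff)
      apply (elim disjE)
      by (simp_all add: doubleton_eq_iff)
  qed
  show "PE \<subseteq> petersenE"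
    unfolding PE_def
    apply (simp only: insert_subset empty_subsetI simp_thms)
    apply (intro conjI)
    by (rule inPE; simp add: PV_def)+
qed

lemma propkey:
  assumes "((x0 \<and> \<not>x1 \<and> \<not>x2) \<or> (\<not>x0 \<and> x1 \<and> \<not>x2) \<or> (\<not>x0 \<and> \<not>x1 \<and> x2))"
    and "((y0 \<and> \<not>y1 \<and> \<not>y2) \<or> (\<not>y0 \<and> y1 \<and> \<not>y2) \<or> (\<not>y0 \<and> \<not>y1 \<and> y2))"
    and "((x3 \<and> \<not>x4 \<and> \<not>x5) \<or> (\<not>x3 \<and> x4 \<and> \<not>x5) \<or> (\<not>x3 \<and> \<not>x4 \<and> x5))"
    and "((y3 \<and> \<not>y4 \<and> \<not>y5) \<or> (\<not>y3 \<and> y4 \<and> \<not>y5) \<or> (\<not>y3 \<and> \<not>y4 \<and> y5))"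
    and "((x6 \<and> \<not>x7 \<and> \<not>x8) \<or> (\<not>x6 \<and> x7 \<and> \<not>x8) \<or> (\<not>x6 \<and> \<not>x7 \<and> x8))"
    and "((y6 \<and> \<not>y7 \<and> \<not>y8) \<or> (\<not>y6 \<and> y7 \<and> \<not>y8) \<or> (\<not>y6 \<and> \<not>y7 \<and> y8))"
    and "((x9 \<and> \<not>x10 \<and> \<not>x11) \<or> (\<not>x9 \<and> x10 \<and> \<not>x11) \<or> (\<not>x9 \<and> \<not>x10 \<and> x11))"
    and "((y9 \<and> \<not>y10 \<and> \<not>y11) \<or> (\<not>y9 \<and> y10 \<and> \<not>y11) \<or> (\<not>y9 \<and> \<not>y10 \<and> y11))"
    and "((x6 \<and> \<not>x9 \<and> \<not>x12) \<or> (\<not>x6 \<and> x9 \<and> \<not>x12) \<or> (\<not>x6 \<and> \<not>x9 \<and> x12))"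
    and "((y6 \<and> \<not>y9 \<and> \<not>y12) \<or> (\<not>y6 \<and> y9 \<and> \<not>y12) \<or> (\<not>y6 \<and> \<not>y9 \<and> y12))"
    and "((x3 \<and> \<not>x10 \<and> \<not>x13) \<or> (\<not>x3 \<and> x10 \<and> \<not>x13) \<or> (\<not>x3 \<and> \<not>x10 \<and> x13))"
    and "((y3 \<and> \<not>y10 \<and> \<not>y13) \<or> (\<not>y3 \<and> y10 \<and> \<not>y13) \<or> (\<not>y3 \<and> \<not>y10 \<and> y13))"
    and "((x4 \<and> \<not>x7 \<and> \<not>x14) \<or> (\<not>x4 \<and> x7 \<and> \<not>x14) \<or> (\<not>x4 \<and> \<not>x7 \<and> x14))"
    and "((y4 \<and> \<not>y7 \<and> \<not>y14) \<or> (\<not>y4 \<and> y7 \<and> \<not>y14) \<or> (\<not>y4 \<and> \<not>y7 \<and> y14))"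
    and "((x0 \<and> \<not>x11 \<and> \<not>x14) \<or> (\<not>x0 \<and> x11 \<and> \<not>x14) \<or> (\<not>x0 \<and> \<not>x11 \<and> x14))"
    and "((y0 \<and> \<not>y11 \<and> \<not>y14) \<or> (\<not>y0 \<and> y11 \<and> \<not>y14) \<or> (\<not>y0 \<and> \<not>y11 \<and> y14))"
    and "((x1 \<and> \<not>x8 \<and> \<not>x13) \<or> (\<not>x1 \<and> x8 \<and> \<not>x13) \<or> (\<not>x1 \<and> \<not>x8 \<and> x13))"
    and "((y1 \<and> \<not>y8 \<and> \<not>y13) \<or> (\<not>y1 \<and> y8 \<and> \<not>y13) \<or> (\<not>y1 \<and> \<not>y8 \<and> y13))"
    and "((x2 \<and> \<not>x5 \<and> \<not>x12) \<or> (\<not>x2 \<and> x5 \<and> \<not>x12) \<or> (\<not>x2 \<and> \<not>x5 \<and> x12))"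
    and "((y2 \<and> \<not>y5 \<and> \<not>y12) \<or> (\<not>y2 \<and> y5 \<and> \<not>y12) \<or> (\<not>y2 \<and> \<not>y5 \<and> y12))"
    and "\<not>(x0 \<and> y0)"
    and "\<not>(x1 \<and> y1)"
    and "\<not>(x2 \<and> y2)"
    and "\<not>(x3 \<and> y3)"
    and "\<not>(x4 \<and> y4)"
    and "\<not>(x5 \<and> y5)"
    and "\<not>(x6 \<and> y6)"
    and "\<not>(x7 \<and> y7)"
    and "\<not>(x8 \<and> y8)"
    and "\<not>(x9 \<and> y9)"
    and "\<not>(x10 \<and> y10)"
    and "\<not>(x11 \<and> y11)"
    and "\<not>(x12 \<and> y12)"
    and "\<not>(x13 \<and> y13)"
    and "\<not>(x14 \<and> y14)"
  shows False
  using assms by smt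

lemma ex1_three:
  assumes "q \<subseteq> P" "\<exists>!e. e\<in>q \<and> u\<in>e" "\<forall>e\<in>P. u\<in>e \<longrightarrow> e=a \<or> e=b \<or> e=c"
    "a\<noteq>b" "a\<noteq>c" "b\<noteq>c" "u\<in>a" "u\<in>b" "u\<in>c"
  shows "(a\<in>q \<and> b\<notin>q \<and> c\<notin>q) \<or> (a\<notin>q \<and> b\<in>q \<and> c\<notin>q) \<or> (a\<notin>q \<and> b\<notin>q \<and> c\<in>q)"
  using assms by blast

lemma pm_local:
  assumes "q \<subseteq> PE" "\<forall>u\<in>PV. \<exists>!e. e\<in>q \<and> u\<in>e"
  shows
    "((({{0,1},{2,3}} \<in> q) \<and> \<not>({{0,1},{2,4}} \<in> q) \<and> \<not>({{0,1},{3,4}} \<in> q)) \<or> (\<not>({{0,1},{2,3}} \<in> q) \<and> ({{0,1},{2,4}} \<in> q) \<and> \<not>({{0,1},{3,4}} \<in> q)) \<or> (\<not>({{0,1},{2,3}} \<in> q) \<and> \<not>({{0,1},{2,4}} \<in> q) \<and> ({{0,1},{3,4}} \<in> q)))"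
    "((({{0,2},{1,3}} \<in> q) \<and> \<not>({{0,2},{1,4}} \<in> q) \<and> \<not>({{0,2},{3,4}} \<in> q)) \<or> (\<not>({{0,2},{1,3}} \<in> q) \<and> ({{0,2},{1,4}} \<in> q) \<and> \<not>({{0,2},{3,4}} \<in> q)) \<or> (\<not>({{0,2},{1,3}} \<in> q) \<and> \<not>({{0,2},{1,4}} \<in> q) \<and> ({{0,2},{3,4}} \<in> q)))"
    "((({{0,3},{1,2}} \<in> q) \<and> \<not>({{0,3},{1,4}} \<in> q) \<and> \<not>({{0,3},{2,4}} \<in> q)) \<or> (\<not>({{0,3},{1,2}} \<in> q) \<and> ({{0,3},{1,4}} \<in> q) \<and> \<not>({{0,3},{2,4}} \<in> q)) \<or> (\<not>({{0,3},{1,2}} \<in> q) \<and> \<not>({{0,3},{1,4}} \<in> q) \<and> ({{0,3},{2,4}} \<in> q)))"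
    "((({{0,4},{1,2}} \<in> q) \<and> \<not>({{0,4},{1,3}} \<in> q) \<and> \<not>({{0,4},{2,3}} \<in> q)) \<or> (\<not>({{0,4},{1,2}} \<in> q) \<and> ({{0,4},{1,3}} \<in> q) \<and> \<not>({{0,4},{2,3}} \<in> q)) \<or> (\<not>({{0,4},{1,2}} \<in> q) \<and> \<not>({{0,4},{1,3}} \<in> q) \<and> ({{0,4},{2,3}} \<in> q)))"
    "((({{0,3},{1,2}} \<in> q) \<and> \<not>({{0,4},{1,2}} \<in> q) \<and> \<not>({{1,2},{3,4}} \<in> q)) \<or> (\<not>({{0,3},{1,2}} \<in> q) \<and> ({{0,4},{1,2}} \<in> q) \<and> \<not>({{1,2},{3,4}} \<in> q)) \<or> (\<not>({{0,3},{1,2}} \<in> q) \<and> \<not>({{0,4},{1,2}} \<in> q) \<and> ({{1,2},{3,4}} \<in> q)))"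
    "((({{0,2},{1,3}} \<in> q) \<and> \<not>({{0,4},{1,3}} \<in> q) \<and> \<not>({{1,3},{2,4}} \<in> q)) \<or> (\<not>({{0,2},{1,3}} \<in> q) \<and> ({{0,4},{1,3}} \<in> q) \<and> \<not>({{1,3},{2,4}} \<in> q)) \<or> (\<not>({{0,2},{1,3}} \<in> q) \<and> \<not>({{0,4},{1,3}} \<in> q) \<and> ({{1,3},{2,4}} \<in> q)))"
    "((({{0,2},{1,4}} \<in> q) \<and> \<not>({{0,3},{1,4}} \<in> q) \<and> \<not>({{1,4},{2,3}} \<in> q)) \<or> (\<not>({{0,2},{1,4}} \<in> q) \<and> ({{0,3},{1,4}} \<in> q) \<and> \<not>({{1,4},{2,3}} \<in> q)) \<or> (\<not>({{0,2},{1,4}} \<in> q) \<and> \<not>({{0,3},{1,4}} \<in> q) \<and> ({{1,4},{2,3}} \<in> q)))"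
    "((({{0,1},{2,3}} \<in> q) \<and> \<not>({{0,4},{2,3}} \<in> q) \<and> \<not>({{1,4},{2,3}} \<in> q)) \<or> (\<not>({{0,1},{2,3}} \<in> q) \<and> ({{0,4},{2,3}} \<in> q) \<and> \<not>({{1,4},{2,3}} \<in> q)) \<or> (\<not>({{0,1},{2,3}} \<in> q) \<and> \<not>({{0,4},{2,3}} \<in> q) \<and> ({{1,4},{2,3}} \<in> q)))"
    "((({{0,1},{2,4}} \<in> q) \<and> \<not>({{0,3},{2,4}} \<in> q) \<and> \<not>({{1,3},{2,4}} \<in> q)) \<or> (\<not>({{0,1},{2,4}} \<in> q) \<and> ({{0,3},{2,4}} \<in> q) \<and> \<not>({{1,3},{2,4}} \<in> q)) \<or> (\<not>({{0,1},{2,4}} \<in> q) \<and> \<not>({{0,3},{2,4}} \<in> q) \<and> ({{1,3},{2,4}} \<in> q)))"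
    "((({{0,1},{3,4}} \<in> q) \<and> \<not>({{0,2},{3,4}} \<in> q) \<and> \<not>({{1,2},{3,4}} \<in> q)) \<or> (\<not>({{0,1},{3,4}} \<in> q) \<and> ({{0,2},{3,4}} \<in> q) \<and> \<not>({{1,2},{3,4}} \<in> q)) \<or> (\<not>({{0,1},{3,4}} \<in> q) \<and> \<not>({{0,2},{3,4}} \<in> q) \<and> ({{1,2},{3,4}} \<in> q)))"
proof -
  have "\<exists>!e. e\<in>q \<and> {0,1}\<in>e" using assms(2) by (simp add: PV_def)
  moreover have "\<forall>e\<in>PE. {0,1}\<in>e \<longrightarrow> e={{0,1},{2,3}} \<or> e={{0,1},{2,4}} \<or> e={{0,1},{3,4}}"
    by (simp add: PE_def doubleton_eq_iff)
  ultimately have u0: "((({{0,1},{2,3}} \<in> q) \<and> \<not>({{0,1},{2,4}} \<in> q) \<and> \<not>({{0,1},{3,4}} \<in> q)) \<or> (\<not>({{0,1},{2,3}} \<in> q) \<and> ({{0,1},{2,4}} \<in> q) \<and> \<not>({{0,1},{3,4}} \<in> q)) \<or> (\<not>({{0,1},{2,3}} \<in> q) \<and> \<not>({{0,1},{2,4}} \<in> q) \<and> ({{0,1},{3,4}} \<in> q)))"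
    by (rule ex1_three[OF assms(1)]) (simp_all add: doubleton_eq_iff)
  have "\<exists>!e. e\<in>q \<and> {0,2}\<in>e" using assms(2) by (simp add: PV_def)
  moreover have "\<forall>e\<in>PE. {0,2}\<in>e \<longrightarrow> e={{0,2},{1,3}} \<or> e={{0,2},{1,4}} \<or> e={{0,2},{3,4}}"
    by (simp add: PE_def doubleton_eq_iff)
  ultimately have u1: "((({{0,2},{1,3}} \<in> q) \<and> \<not>({{0,2},{1,4}} \<in> q) \<and> \<not>({{0,2},{3,4}} \<in> q)) \<or> (\<not>({{0,2},{1,3}} \<in> q) \<and> ({{0,2},{1,4}} \<in> q) \<and> \<not>({{0,2},{3,4}} \<in> q)) \<or> (\<not>({{0,2},{1,3}} \<in> q) \<and> \<not>({{0,2},{1,4}} \<in> q) \<and> ({{0,2},{3,4}} \<in> q)))"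
    by (rule ex1_three[OF assms(1)]) (simp_all add: doubleton_eq_iff)
  have "\<exists>!e. e\<in>q \<and> {0,3}\<in>e" using assms(2) by (simp add: PV_def)
  moreover have "\<forall>e\<in>PE. {0,3}\<in>e \<longrightarrow> e={{0,3},{1,2}} \<or> e={{0,3},{1,4}} \<or> e={{0,3},{2,4}}"
    by (simp add: PE_def doubleton_eq_iff)
  ultimately have u2: "((({{0,3},{1,2}} \<in> q) \<and> \<not>({{0,3},{1,4}} \<in> q) \<and> \<not>({{0,3},{2,4}} \<in> q)) \<or> (\<not>({{0,3},{1,2}} \<in> q) \<and> ({{0,3},{1,4}} \<in> q) \<and> \<not>({{0,3},{2,4}} \<in> q)) \<or> (\<not>({{0,3},{1,2}} \<in> q) \<and> \<not>({{0,3},{1,4}} \<in> q) \<and> ({{0,3},{2,4}} \<in> q)))"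
    by (rule ex1_three[OF assms(1)]) (simp_all add: doubleton_eq_iff)
  have "\<exists>!e. e\<in>q \<and> {0,4}\<in>e" using assms(2) by (simp add: PV_def)
  moreover have "\<forall>e\<in>PE. {0,4}\<in>e \<longrightarrow> e={{0,4},{1,2}} \<or> e={{0,4},{1,3}} \<or> e={{0,4},{2,3}}"
    by (simp add: PE_def doubleton_eq_iff)
  ultimately have u3: "((({{0,4},{1,2}} \<in> q) \<and> \<not>({{0,4},{1,3}} \<in> q) \<and> \<not>({{0,4},{2,3}} \<in> q)) \<or> (\<not>({{0,4},{1,2}} \<in> q) \<and> ({{0,4},{1,3}} \<in> q) \<and> \<not>({{0,4},{2,3}} \<in> q)) \<or> (\<not>({{0,4},{1,2}} \<in> q) \<and> \<not>({{0,4},{1,3}} \<in> q) \<and> ({{0,4},{2,3}} \<in> q)))"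
    by (rule ex1_three[OF assms(1)]) (simp_all add: doubleton_eq_iff)
  have "\<exists>!e. e\<in>q \<and> {1,2}\<in>e" using assms(2) by (simp add: PV_def)
  moreover have "\<forall>e\<in>PE. {1,2}\<in>e \<longrightarrow> e={{0,3},{1,2}} \<or> e={{0,4},{1,2}} \<or> e={{1,2},{3,4}}"
    by (simp add: PE_def doubleton_eq_iff)
  ultimately have u4: "((({{0,3},{1,2}} \<in> q) \<and> \<not>({{0,4},{1,2}} \<in> q) \<and> \<not>({{1,2},{3,4}} \<in> q)) \<or> (\<not>({{0,3},{1,2}} \<in> q) \<and> ({{0,4},{1,2}} \<in> q) \<and> \<not>({{1,2},{3,4}} \<in> q)) \<or> (\<not>({{0,3},{1,2}} \<in> q) \<and> \<not>({{0,4},{1,2}} \<in> q) \<and> ({{1,2},{3,4}} \<in> q)))"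
    by (rule ex1_three[OF assms(1)]) (simp_all add: doubleton_eq_iff)
  have "\<exists>!e. e\<in>q \<and> {1,3}\<in>e" using assms(2) by (simp add: PV_def)
  moreover have "\<forall>e\<in>PE. {1,3}\<in>e \<longrightarrow> e={{0,2},{1,3}} \<or> e={{0,4},{1,3}} \<or> e={{1,3},{2,4}}"
    by (simp add: PE_def doubleton_eq_iff)
  ultimately have u5: "((({{0,2},{1,3}} \<in> q) \<and> \<not>({{0,4},{1,3}} \<in> q) \<and> \<not>({{1,3},{2,4}} \<in> q)) \<or> (\<not>({{0,2},{1,3}} \<in> q) \<and> ({{0,4},{1,3}} \<in> q) \<and> \<not>({{1,3},{2,4}} \<in> q)) \<or> (\<not>({{0,2},{1,3}} \<in> q) \<and> \<not>({{0,4},{1,3}} \<in> q) \<and> ({{1,3},{2,4}} \<in> q)))"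
    by (rule ex1_three[OF assms(1)]) (simp_all add: doubleton_eq_iff)
  have "\<exists>!e. e\<in>q \<and> {1,4}\<in>e" using assms(2) by (simp add: PV_def)
  moreover have "\<forall>e\<in>PE. {1,4}\<in>e \<longrightarrow> e={{0,2},{1,4}} \<or> e={{0,3},{1,4}} \<or> e={{1,4},{2,3}}"
    by (simp add: PE_def doubleton_eq_iff)
  ultimately have u6: "((({{0,2},{1,4}} \<in> q) \<and> \<not>({{0,3},{1,4}} \<in> q) \<and> \<not>({{1,4},{2,3}} \<in> q)) \<or> (\<not>({{0,2},{1,4}} \<in> q) \<and> ({{0,3},{1,4}} \<in> q) \<and> \<not>({{1,4},{2,3}} \<in> q)) \<or> (\<not>({{0,2},{1,4}} \<in> q) \<and> \<not>({{0,3},{1,4}} \<in> q) \<and> ({{1,4},{2,3}} \<in> q)))"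
    by (rule ex1_three[OF assms(1)]) (simp_all add: doubleton_eq_iff)
  have "\<exists>!e. e\<in>q \<and> {2,3}\<in>e" using assms(2) by (simp add: PV_def)
  moreover have "\<forall>e\<in>PE. {2,3}\<in>e \<longrightarrow> e={{0,1},{2,3}} \<or> e={{0,4},{2,3}} \<or> e={{1,4},{2,3}}"
    by (simp add: PE_def doubleton_eq_iff)
  ultimately have u7: "((({{0,1},{2,3}} \<in> q) \<and> \<not>({{0,4},{2,3}} \<in> q) \<and> \<not>({{1,4},{2,3}} \<in> q)) \<or> (\<not>({{0,1},{2,3}} \<in> q) \<and> ({{0,4},{2,3}} \<in> q) \<and> \<not>({{1,4},{2,3}} \<in> q)) \<or> (\<not>({{0,1},{2,3}} \<in> q) \<and> \<not>({{0,4},{2,3}} \<in> q) \<and> ({{1,4},{2,3}} \<in> q)))"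
    by (rule ex1_three[OF assms(1)]) (simp_all add: doubleton_eq_iff)
  have "\<exists>!e. e\<in>q \<and> {2,4}\<in>e" using assms(2) by (simp add: PV_def)
  moreover have "\<forall>e\<in>PE. {2,4}\<in>e \<longrightarrow> e={{0,1},{2,4}} \<or> e={{0,3},{2,4}} \<or> e={{1,3},{2,4}}"
    by (simp add: PE_def doubleton_eq_iff)
  ultimately have u8: "((({{0,1},{2,4}} \<in> q) \<and> \<not>({{0,3},{2,4}} \<in> q) \<and> \<not>({{1,3},{2,4}} \<in> q)) \<or> (\<not>({{0,1},{2,4}} \<in> q) \<and> ({{0,3},{2,4}} \<in> q) \<and> \<not>({{1,3},{2,4}} \<in> q)) \<or> (\<not>({{0,1},{2,4}} \<in> q) \<and> \<not>({{0,3},{2,4}} \<in> q) \<and> ({{1,3},{2,4}} \<in> q)))"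
    by (rule ex1_three[OF assms(1)]) (simp_all add: doubleton_eq_iff)
  have "\<exists>!e. e\<in>q \<and> {3,4}\<in>e" using assms(2) by (simp add: PV_def)
  moreover have "\<forall>e\<in>PE. {3,4}\<in>e \<longrightarrow> e={{0,1},{3,4}} \<or> e={{0,2},{3,4}} \<or> e={{1,2},{3,4}}"
    by (simp add: PE_def doubleton_eq_iff)
  ultimately have u9: "((({{0,1},{3,4}} \<in> q) \<and> \<not>({{0,2},{3,4}} \<in> q) \<and> \<not>({{1,2},{3,4}} \<in> q)) \<or> (\<not>({{0,1},{3,4}} \<in> q) \<and> ({{0,2},{3,4}} \<in> q) \<and> \<not>({{1,2},{3,4}} \<in> q)) \<or> (\<not>({{0,1},{3,4}} \<in> q) \<and> \<not>({{0,2},{3,4}} \<in> q) \<and> ({{1,2},{3,4}} \<in> q)))"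
    by (rule ex1_three[OF assms(1)]) (simp_all add: doubleton_eq_iff)
  show "((({{0,1},{2,3}} \<in> q) \<and> \<not>({{0,1},{2,4}} \<in> q) \<and> \<not>({{0,1},{3,4}} \<in> q)) \<or> (\<not>({{0,1},{2,3}} \<in> q) \<and> ({{0,1},{2,4}} \<in> q) \<and> \<not>({{0,1},{3,4}} \<in> q)) \<or> (\<not>({{0,1},{2,3}} \<in> q) \<and> \<not>({{0,1},{2,4}} \<in> q) \<and> ({{0,1},{3,4}} \<in> q)))" by (rule u0)
  show "((({{0,2},{1,3}} \<in> q) \<and> \<not>({{0,2},{1,4}} \<in> q) \<and> \<not>({{0,2},{3,4}} \<in> q)) \<or> (\<not>({{0,2},{1,3}} \<in> q) \<and> ({{0,2},{1,4}} \<in> q) \<and> \<not>({{0,2},{3,4}} \<in> q)) \<or> (\<not>({{0,2},{1,3}} \<in> q) \<and> \<not>({{0,2},{1,4}} \<in> q) \<and> ({{0,2},{3,4}} \<in> q)))" by (rule u1)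
  show "((({{0,3},{1,2}} \<in> q) \<and> \<not>({{0,3},{1,4}} \<in> q) \<and> \<not>({{0,3},{2,4}} \<in> q)) \<or> (\<not>({{0,3},{1,2}} \<in> q) \<and> ({{0,3},{1,4}} \<in> q) \<and> \<not>({{0,3},{2,4}} \<in> q)) \<or> (\<not>({{0,3},{1,2}} \<in> q) \<and> \<not>({{0,3},{1,4}} \<in> q) \<and> ({{0,3},{2,4}} \<in> q)))" by (rule u2)
  show "((({{0,4},{1,2}} \<in> q) \<and> \<not>({{0,4},{1,3}} \<in> q) \<and> \<not>({{0,4},{2,3}} \<in> q)) \<or> (\<not>({{0,4},{1,2}} \<in> q) \<and> ({{0,4},{1,3}} \<in> q) \<and> \<not>({{0,4},{2,3}} \<in> q)) \<or> (\<not>({{0,4},{1,2}} \<in> q) \<and> \<not>({{0,4},{1,3}} \<in> q) \<and> ({{0,4},{2,3}} \<in> q)))" by (rule u3)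
  show "((({{0,3},{1,2}} \<in> q) \<and> \<not>({{0,4},{1,2}} \<in> q) \<and> \<not>({{1,2},{3,4}} \<in> q)) \<or> (\<not>({{0,3},{1,2}} \<in> q) \<and> ({{0,4},{1,2}} \<in> q) \<and> \<not>({{1,2},{3,4}} \<in> q)) \<or> (\<not>({{0,3},{1,2}} \<in> q) \<and> \<not>({{0,4},{1,2}} \<in> q) \<and> ({{1,2},{3,4}} \<in> q)))" by (rule u4)
  show "((({{0,2},{1,3}} \<in> q) \<and> \<not>({{0,4},{1,3}} \<in> q) \<and> \<not>({{1,3},{2,4}} \<in> q)) \<or> (\<not>({{0,2},{1,3}} \<in> q) \<and> ({{0,4},{1,3}} \<in> q) \<and> \<not>({{1,3},{2,4}} \<in> q)) \<or> (\<not>({{0,2},{1,3}} \<in> q) \<and> \<not>({{0,4},{1,3}} \<in> q) \<and> ({{1,3},{2,4}} \<in> q)))" by (rule u5)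
  show "((({{0,2},{1,4}} \<in> q) \<and> \<not>({{0,3},{1,4}} \<in> q) \<and> \<not>({{1,4},{2,3}} \<in> q)) \<or> (\<not>({{0,2},{1,4}} \<in> q) \<and> ({{0,3},{1,4}} \<in> q) \<and> \<not>({{1,4},{2,3}} \<in> q)) \<or> (\<not>({{0,2},{1,4}} \<in> q) \<and> \<not>({{0,3},{1,4}} \<in> q) \<and> ({{1,4},{2,3}} \<in> q)))" by (rule u6)
  show "((({{0,1},{2,3}} \<in> q) \<and> \<not>({{0,4},{2,3}} \<in> q) \<and> \<not>({{1,4},{2,3}} \<in> q)) \<or> (\<not>({{0,1},{2,3}} \<in> q) \<and> ({{0,4},{2,3}} \<in> q) \<and> \<not>({{1,4},{2,3}} \<in> q)) \<or> (\<not>({{0,1},{2,3}} \<in> q) \<and> \<not>({{0,4},{2,3}} \<in> q) \<and> ({{1,4},{2,3}} \<in> q)))" by (rule u7)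
  show "((({{0,1},{2,4}} \<in> q) \<and> \<not>({{0,3},{2,4}} \<in> q) \<and> \<not>({{1,3},{2,4}} \<in> q)) \<or> (\<not>({{0,1},{2,4}} \<in> q) \<and> ({{0,3},{2,4}} \<in> q) \<and> \<not>({{1,3},{2,4}} \<in> q)) \<or> (\<not>({{0,1},{2,4}} \<in> q) \<and> \<not>({{0,3},{2,4}} \<in> q) \<and> ({{1,3},{2,4}} \<in> q)))" by (rule u8)
  show "((({{0,1},{3,4}} \<in> q) \<and> \<not>({{0,2},{3,4}} \<in> q) \<and> \<not>({{1,2},{3,4}} \<in> q)) \<or> (\<not>({{0,1},{3,4}} \<in> q) \<and> ({{0,2},{3,4}} \<in> q) \<and> \<not>({{1,2},{3,4}} \<in> q)) \<or> (\<not>({{0,1},{3,4}} \<in> q) \<and> \<not>({{0,2},{3,4}} \<in> q) \<and> ({{1,2},{3,4}} \<in> q)))" by (rule u9)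
qed

lemma key_PE:
  assumes "q \<subseteq> PE" "\<forall>u\<in>PV. \<exists>!e. e\<in>q \<and> u\<in>e"
    "q' \<subseteq> PE" "\<forall>u\<in>PV. \<exists>!e. e\<in>q' \<and> u\<in>e"
  shows "q \<inter> q' \<noteq> {}"
proof
  assume dis: "q \<inter> q' = {}"
  note A = pm_local[OF assms(1,2)]
  note B = pm_local[OF assms(3,4)]
  have D: "\<not>(x \<in> q \<and> x \<in> q')" for x using dis by blast
  show False
    by (rule propkey[OF A(1) B(1) A(2) B(2) A(3) B(3) A(4) B(4) A(5) B(5) A(6) B(6) A(7) B(7) A(8) B(8) A(9) B(9) A(10) B(10) D D D D D D D D D D D D D D D])
qed



lemma Ncomb_add: "x \<in> Ncomb M \<Longrightarrow> y \<in> Ncomb M \<Longrightarrow> (\<lambda>i. x i + y i) \<in> Ncomb M"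
proof (induction x rule: Ncomb.induct)
  case zero then show ?case by simp
next
  case (add x z)
  have "(\<lambda>i. z i + y i) \<in> Ncomb M" using add by blast
  from Ncomb.add[OF add(1) this] show ?case by (simp add: add.assoc)
qed

lemma Ncomb_mult: "x \<in> Ncomb M \<Longrightarrow> (\<lambda>i. n * x i) \<in> Ncomb M"
proof (induction n)
  case 0 then show ?case using Ncomb.zero by simp
next
  case (Suc n)
  from Ncomb_add[OF Suc.prems Suc.IH[OF Suc.prems]] show ?case by simp
qed

lemma vecs_add: "a \<in> vecs V \<Longrightarrow> b \<in> vecs V \<Longrightarrow> (\<lambda>i. a i + b i) \<in> vecs V"
  by (simp add: vecs_def)

lemma Nbar_add: assumes "a \<in> Nbar V M" "b \<in> Nbar V M" shows "(\<lambda>i. a i + b i) \<in> Nbar V M"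
proof -
  obtain k where k: "k \<ge> 1" "(\<lambda>i. k * a i) \<in> Ncomb M" using assms(1) by (auto simp: Nbar_def)
  obtain l where l: "l \<ge> 1" "(\<lambda>i. l * b i) \<in> Ncomb M" using assms(2) by (auto simp: Nbar_def)
  have "(\<lambda>i. l * (k * a i) + k * (l * b i)) \<in> Ncomb M"
    using Ncomb_add[OF Ncomb_mult[OF k(2), of l] Ncomb_mult[OF l(2), of k]] by simp
  then have "(\<lambda>i. (k*l) * (a i + b i)) \<in> Ncomb M" by (simp add: algebra_simps)
  moreover have "k * l \<ge> 1" using k l by simp
  ultimately show ?thesis using assms vecs_add unfolding Nbar_def by blast
qed

lemma Nbar_zero: "(\<lambda>_. 0) \<in> Nbar V M"
  unfolding Nbar_def vecs_def using Ncomb.zero by force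

lemma Ncomb_sub: assumes "H \<subseteq> Nbar V M" shows "Ncomb H \<subseteq> Nbar V M"
proof
  fix x assume "x \<in> Ncomb H" then show "x \<in> Nbar V M"
  proof induction
    case zero show ?case by (rule Nbar_zero)
  next
    case (add x y) then show ?case using Nbar_add assms by blast
  qed
qed

definition Irr :: "'a vect set \<Rightarrow> 'a vect set" where
  "Irr M = {x \<in> M. x \<noteq> (\<lambda>_. 0) \<and> (\<forall>a\<in>M. \<forall>b\<in>M. x = (\<lambda>i. a i + b i) \<longrightarrow> a = (\<lambda>_. 0) \<or> b = (\<lambda>_. 0))}"

lemma Irr_in: assumes "H \<subseteq> M" "\<And>a b. a \<in> M \<Longrightarrow> b \<in> M \<Longrightarrow> (\<lambda>i. a i + b i) \<in> M"
  "(\<lambda>_. 0) \<in> M"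
  shows "x \<in> Ncomb H \<Longrightarrow> x \<in> Irr M \<Longrightarrow> x \<in> H"
proof (induction x rule: Ncomb.induct)
  case zero then show ?case by (simp add: Irr_def)
next
  case (add h y)
  have yM: "y \<in> M" using add(2) by induction (use assms in auto)
  have "h \<in> M" using add(1) assms(1) by blast
  with yM add(4) have "h = (\<lambda>_. 0) \<or> y = (\<lambda>_. 0)" unfolding Irr_def by blast
  then show ?case
  proof
    assume "h = (\<lambda>_. 0)" then show ?thesis using add by simp
  next
    assume "y = (\<lambda>_. 0)" then show ?thesis using add by simp
  qed
qed

definition supp :: "'a set \<Rightarrow> ('a set + 'a set set) set" where
  "supp V = Inl ` Kset V \<union> Inr ` Cset V"

lemma finite_supp: "finite V \<Longrightarrow> finite (supp V)"
proof -
  assume f: "finite V"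
  have "Kset V \<subseteq> Pow V" by (auto simp: Kset_def)
  then have "finite (Kset V)" using f by (meson finite_Pow_iff finite_subset)
  have "Cset V \<subseteq> Pow (Pow V)" by (auto simp: Cset_def)
  then have "finite (Cset V)" using f by (meson finite_Pow_iff finite_subset)
  show ?thesis unfolding supp_def using \<open>finite (Kset V)\<close> \<open>finite (Cset V)\<close> by simp
qed

lemma vecs_zero_iff: assumes "finite V" "x \<in> vecs V"
  shows "x = (\<lambda>_. 0) \<longleftrightarrow> (\<Sum>i\<in>supp V. x i) = 0"
proof
  assume "(\<Sum>i\<in>supp V. x i) = 0"
  then have "\<forall>i\<in>supp V. x i = 0" using finite_supp[OF assms(1)] by simp
  moreover have "\<forall>i. i \<notin> supp V \<longrightarrow> x i = 0" using assms(2) unfolding vecs_def supp_def by blast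
  ultimately show "x = (\<lambda>_. 0)" by (intro ext) blast
qed simp

lemma Nbar_gen: assumes "finite V"
  shows "x \<in> Nbar V M \<Longrightarrow> x \<in> Ncomb (Irr (Nbar V M))"
proof (induction "\<Sum>i\<in>supp V. x i" arbitrary: x rule: less_induct)
  case less
  show ?case
  proof (cases "x \<in> Irr (Nbar V M)")
    case True
    from Ncomb.add[OF True Ncomb.zero] show ?thesis by simp
  next
    case False
    show ?thesis
    proof (cases "x = (\<lambda>_. 0)")
      case True then show ?thesis using Ncomb.zero by simp
    next
      case nz: False
      with False less.prems obtain a b where ab: "a \<in> Nbar V M" "b \<in> Nbar V M"
        "x = (\<lambda>i. a i + b i)" "a \<noteq> (\<lambda>_. 0)" "b \<noteq> (\<lambda>_. 0)"
        unfolding Irr_def by blast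
      have av: "a \<in> vecs V" and bv: "b \<in> vecs V" using ab by (auto simp: Nbar_def)
      have sx: "(\<Sum>i\<in>supp V. x i) = (\<Sum>i\<in>supp V. a i) + (\<Sum>i\<in>supp V. b i)"
        using ab(3) by (simp add: sum.distrib)
      have "(\<Sum>i\<in>supp V. a i) \<noteq> 0" using vecs_zero_iff[OF assms av] ab(4) by simp
      moreover have "(\<Sum>i\<in>supp V. b i) \<noteq> 0" using vecs_zero_iff[OF assms bv] ab(5) by simp
      ultimately have "a \<in> Ncomb (Irr (Nbar V M))" "b \<in> Ncomb (Irr (Nbar V M))"
        using less.hyps ab(1,2) sx by auto
      from Ncomb_add[OF this] ab(3) show ?thesis by simp
    qed
  qed
qed

lemma min_gen_Irr: assumes "finite V"
  shows "min_generating_set (Nbar V M) (Irr (Nbar V M))"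
proof -
  have sub: "Irr (Nbar V M) \<subseteq> Nbar V M" by (auto simp: Irr_def)
  have eq: "Ncomb (Irr (Nbar V M)) = Nbar V M"
    using Ncomb_sub[OF sub] Nbar_gen[OF assms] by blast
  have "Ncomb H' \<noteq> Nbar V M" if psub: "H' \<subset> Irr (Nbar V M)" for H'
  proof
    assume e: "Ncomb H' = Nbar V M"
    obtain x where x: "x \<in> Irr (Nbar V M)" "x \<notin> H'" using psubset_imp_ex_mem[OF psub] by blast
    have "x \<in> Ncomb H'" using e x sub by blast
    from Irr_in[of H' "Nbar V M", OF _ Nbar_add Nbar_zero this x(1)] psub sub x(2)
    show False by blast
  qed
  then show ?thesis unfolding min_generating_set_def using sub eq by blast
qed

lemma min_gen_contains: assumes "min_generating_set (Nbar V M) H" "x \<in> Irr (Nbar V M)"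
  shows "x \<in> H"
proof -
  have "H \<subseteq> Nbar V M" "Ncomb H = Nbar V M" using assms(1) by (auto simp: min_generating_set_def)
  moreover have "x \<in> Nbar V M" using assms(2) by (simp add: Irr_def)
  ultimately show ?thesis using Irr_in[of H "Nbar V M", OF _ Nbar_add Nbar_zero _ assms(2)] by blast
qed



definition H1 :: "nat set set" where "H1 = {{0,1},{0,2},{0,3},{1,2},{1,3}}"
definition A1 :: "nat set set" where "A1 = {{0,4},{1,4},{2,3},{2,4},{3,4}}"
definition H2 :: "nat set set" where "H2 = {{0,1},{0,2},{0,4},{1,2},{1,4}}"
definition A2 :: "nat set set" where "A2 = {{0,3},{1,3},{2,3},{2,4},{3,4}}"
definition H3 :: "nat set set" where "H3 = {{0,1},{0,2},{1,2},{2,3},{2,4}}"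
definition A3 :: "nat set set" where "A3 = {{0,3},{0,4},{1,3},{1,4},{3,4}}"

lemma card_PV: "card PV = 10"
  by (simp add: PV_def doubleton_eq_iff)

lemma inCset: "H \<inter> A = {} \<Longrightarrow> H \<union> A = V \<Longrightarrow> card H = card V div 2 \<Longrightarrow> card A = card V div 2
  \<Longrightarrow> {H,A} \<in> Cset V"
  unfolding Cset_def by blast

lemma c1: "{H1,A1} \<in> Cset PV"
  by (rule inCset) (simp_all add: card_PV H1_def A1_def PV_def doubleton_eq_iff insert_commute)
lemma c2: "{H2,A2} \<in> Cset PV"
  by (rule inCset) (simp_all add: card_PV H2_def A2_def PV_def doubleton_eq_iff insert_commute)
lemma c3: "{H3,A3} \<in> Cset PV"
  by (rule inCset) (simp_all add: card_PV H3_def A3_def PV_def doubleton_eq_iff insert_commute)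
definition q11 :: "nat set set set" where "q11 = {{{0,1},{2,3}},{{0,2},{1,4}},{{0,3},{2,4}},{{1,3},{0,4}},{{1,2},{3,4}}}"
definition q12 :: "nat set set set" where "q12 = {{{0,1},{2,3}},{{0,2},{3,4}},{{0,3},{1,4}},{{1,2},{0,4}},{{1,3},{2,4}}}"
definition q21 :: "nat set set set" where "q21 = {{{0,1},{2,4}},{{0,2},{1,3}},{{1,4},{0,3}},{{0,4},{2,3}},{{1,2},{3,4}}}"
definition q22 :: "nat set set set" where "q22 = {{{0,1},{2,4}},{{0,2},{3,4}},{{1,2},{0,3}},{{0,4},{1,3}},{{1,4},{2,3}}}"
definition q31 :: "nat set set set" where "q31 = {{{0,1},{3,4}},{{0,2},{1,3}},{{2,4},{0,3}},{{1,2},{0,4}},{{2,3},{1,4}}}"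
definition q32 :: "nat set set set" where "q32 = {{{0,1},{3,4}},{{0,2},{1,4}},{{1,2},{0,3}},{{2,3},{0,4}},{{2,4},{1,3}}}"

lemma bedge: "h \<in> H \<Longrightarrow> a \<in> A \<Longrightarrow> {h,a} \<in> B_edges {H,A}"
  unfolding B_edges_def by blast

lemma ex1_lit: "e0 \<in> q \<Longrightarrow> u \<in> e0 \<Longrightarrow> (\<forall>e\<in>q. u\<in>e \<longrightarrow> e = e0) \<Longrightarrow> \<exists>!e. e\<in>q \<and> u\<in>e"
  by blast

lemma pm_q11: "perfect_matching PV (B_edges {H1,A1}) q11"
  unfolding perfect_matching_def
proof
  show "q11 \<subseteq> B_edges {H1,A1}" unfolding q11_def
    apply (simp only: insert_subset empty_subsetI simp_thms)
    apply (intro conjI)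
    by (rule bedge; simp add: H1_def A1_def)+
  show "\<forall>u\<in>PV. \<exists>!e. e\<in>q11 \<and> u\<in>e" unfolding PV_def q11_def
    apply (simp only: ball_simps simp_thms)
    apply (intro conjI)
    apply (rule ex1_lit[of "{{0,1},{2,3}}"], simp, simp, simp add: doubleton_eq_iff)
    apply (rule ex1_lit[of "{{0,2},{1,4}}"], simp, simp, simp add: doubleton_eq_iff)
    apply (rule ex1_lit[of "{{0,3},{2,4}}"], simp, simp, simp add: doubleton_eq_iff)
    apply (rule ex1_lit[of "{{1,3},{0,4}}"], simp, simp, simp add: doubleton_eq_iff)
    apply (rule ex1_lit[of "{{1,2},{3,4}}"], simp, simp, simp add: doubleton_eq_iff)
    apply (rule ex1_lit[of "{{1,3},{0,4}}"], simp, simp, simp add: doubleton_eq_iff)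
    apply (rule ex1_lit[of "{{0,2},{1,4}}"], simp, simp, simp add: doubleton_eq_iff)
    apply (rule ex1_lit[of "{{0,1},{2,3}}"], simp, simp, simp add: doubleton_eq_iff)
    apply (rule ex1_lit[of "{{0,3},{2,4}}"], simp, simp, simp add: doubleton_eq_iff)
    apply (rule ex1_lit[of "{{1,2},{3,4}}"], simp, simp, simp add: doubleton_eq_iff)
    done
qed

lemma pm_q12: "perfect_matching PV (B_edges {H1,A1}) q12"
  unfolding perfect_matching_def
proof
  show "q12 \<subseteq> B_edges {H1,A1}" unfolding q12_def
    apply (simp only: insert_subset empty_subsetI simp_thms)
    apply (intro conjI)
    by (rule bedge; simp add: H1_def A1_def)+
  show "\<forall>u\<in>PV. \<exists>!e. e\<in>q12 \<and> u\<in>e" unfolding PV_def q12_def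
    apply (simp only: ball_simps simp_thms)
    apply (intro conjI)
    apply (rule ex1_lit[of "{{0,1},{2,3}}"], simp, simp, simp add: doubleton_eq_iff)
    apply (rule ex1_lit[of "{{0,2},{3,4}}"], simp, simp, simp add: doubleton_eq_iff)
    apply (rule ex1_lit[of "{{0,3},{1,4}}"], simp, simp, simp add: doubleton_eq_iff)
    apply (rule ex1_lit[of "{{1,2},{0,4}}"], simp, simp, simp add: doubleton_eq_iff)
    apply (rule ex1_lit[of "{{1,2},{0,4}}"], simp, simp, simp add: doubleton_eq_iff)
    apply (rule ex1_lit[of "{{1,3},{2,4}}"], simp, simp, simp add: doubleton_eq_iff)
    apply (rule ex1_lit[of "{{0,3},{1,4}}"], simp, simp, simp add: doubleton_eq_iff)
    apply (rule ex1_lit[of "{{0,1},{2,3}}"], simp, simp, simp add: doubleton_eq_iff)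
    apply (rule ex1_lit[of "{{1,3},{2,4}}"], simp, simp, simp add: doubleton_eq_iff)
    apply (rule ex1_lit[of "{{0,2},{3,4}}"], simp, simp, simp add: doubleton_eq_iff)
    done
qed

lemma pm_q21: "perfect_matching PV (B_edges {H2,A2}) q21"
  unfolding perfect_matching_def
proof
  show "q21 \<subseteq> B_edges {H2,A2}" unfolding q21_def
    apply (simp only: insert_subset empty_subsetI simp_thms)
    apply (intro conjI)
    by (rule bedge; simp add: H2_def A2_def)+
  show "\<forall>u\<in>PV. \<exists>!e. e\<in>q21 \<and> u\<in>e" unfolding PV_def q21_def
    apply (simp only: ball_simps simp_thms)
    apply (intro conjI)
    apply (rule ex1_lit[of "{{0,1},{2,4}}"], simp, simp, simp add: doubleton_eq_iff)
    apply (rule ex1_lit[of "{{0,2},{1,3}}"], simp, simp, simp add: doubleton_eq_iff)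
    apply (rule ex1_lit[of "{{1,4},{0,3}}"], simp, simp, simp add: doubleton_eq_iff)
    apply (rule ex1_lit[of "{{0,4},{2,3}}"], simp, simp, simp add: doubleton_eq_iff)
    apply (rule ex1_lit[of "{{1,2},{3,4}}"], simp, simp, simp add: doubleton_eq_iff)
    apply (rule ex1_lit[of "{{0,2},{1,3}}"], simp, simp, simp add: doubleton_eq_iff)
    apply (rule ex1_lit[of "{{1,4},{0,3}}"], simp, simp, simp add: doubleton_eq_iff)
    apply (rule ex1_lit[of "{{0,4},{2,3}}"], simp, simp, simp add: doubleton_eq_iff)
    apply (rule ex1_lit[of "{{0,1},{2,4}}"], simp, simp, simp add: doubleton_eq_iff)
    apply (rule ex1_lit[of "{{1,2},{3,4}}"], simp, simp, simp add: doubleton_eq_iff)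
    done
qed

lemma pm_q22: "perfect_matching PV (B_edges {H2,A2}) q22"
  unfolding perfect_matching_def
proof
  show "q22 \<subseteq> B_edges {H2,A2}" unfolding q22_def
    apply (simp only: insert_subset empty_subsetI simp_thms)
    apply (intro conjI)
    by (rule bedge; simp add: H2_def A2_def)+
  show "\<forall>u\<in>PV. \<exists>!e. e\<in>q22 \<and> u\<in>e" unfolding PV_def q22_def
    apply (simp only: ball_simps simp_thms)
    apply (intro conjI)
    apply (rule ex1_lit[of "{{0,1},{2,4}}"], simp, simp, simp add: doubleton_eq_iff)
    apply (rule ex1_lit[of "{{0,2},{3,4}}"], simp, simp, simp add: doubleton_eq_iff)
    apply (rule ex1_lit[of "{{1,2},{0,3}}"], simp, simp, simp add: doubleton_eq_iff)
    apply (rule ex1_lit[of "{{0,4},{1,3}}"], simp, simp, simp add: doubleton_eq_iff)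
    apply (rule ex1_lit[of "{{1,2},{0,3}}"], simp, simp, simp add: doubleton_eq_iff)
    apply (rule ex1_lit[of "{{0,4},{1,3}}"], simp, simp, simp add: doubleton_eq_iff)
    apply (rule ex1_lit[of "{{1,4},{2,3}}"], simp, simp, simp add: doubleton_eq_iff)
    apply (rule ex1_lit[of "{{1,4},{2,3}}"], simp, simp, simp add: doubleton_eq_iff)
    apply (rule ex1_lit[of "{{0,1},{2,4}}"], simp, simp, simp add: doubleton_eq_iff)
    apply (rule ex1_lit[of "{{0,2},{3,4}}"], simp, simp, simp add: doubleton_eq_iff)
    done
qed

lemma pm_q31: "perfect_matching PV (B_edges {H3,A3}) q31"
  unfolding perfect_matching_def
proof
  show "q31 \<subseteq> B_edges {H3,A3}" unfolding q31_def
    apply (simp only: insert_subset empty_subsetI simp_thms)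
    apply (intro conjI)
    by (rule bedge; simp add: H3_def A3_def)+
  show "\<forall>u\<in>PV. \<exists>!e. e\<in>q31 \<and> u\<in>e" unfolding PV_def q31_def
    apply (simp only: ball_simps simp_thms)
    apply (intro conjI)
    apply (rule ex1_lit[of "{{0,1},{3,4}}"], simp, simp, simp add: doubleton_eq_iff)
    apply (rule ex1_lit[of "{{0,2},{1,3}}"], simp, simp, simp add: doubleton_eq_iff)
    apply (rule ex1_lit[of "{{2,4},{0,3}}"], simp, simp, simp add: doubleton_eq_iff)
    apply (rule ex1_lit[of "{{1,2},{0,4}}"], simp, simp, simp add: doubleton_eq_iff)
    apply (rule ex1_lit[of "{{1,2},{0,4}}"], simp, simp, simp add: doubleton_eq_iff)
    apply (rule ex1_lit[of "{{0,2},{1,3}}"], simp, simp, simp add: doubleton_eq_iff)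
    apply (rule ex1_lit[of "{{2,3},{1,4}}"], simp, simp, simp add: doubleton_eq_iff)
    apply (rule ex1_lit[of "{{2,3},{1,4}}"], simp, simp, simp add: doubleton_eq_iff)
    apply (rule ex1_lit[of "{{2,4},{0,3}}"], simp, simp, simp add: doubleton_eq_iff)
    apply (rule ex1_lit[of "{{0,1},{3,4}}"], simp, simp, simp add: doubleton_eq_iff)
    done
qed

lemma pm_q32: "perfect_matching PV (B_edges {H3,A3}) q32"
  unfolding perfect_matching_def
proof
  show "q32 \<subseteq> B_edges {H3,A3}" unfolding q32_def
    apply (simp only: insert_subset empty_subsetI simp_thms)
    apply (intro conjI)
    by (rule bedge; simp add: H3_def A3_def)+
  show "\<forall>u\<in>PV. \<exists>!e. e\<in>q32 \<and> u\<in>e" unfolding PV_def q32_def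
    apply (simp only: ball_simps simp_thms)
    apply (intro conjI)
    apply (rule ex1_lit[of "{{0,1},{3,4}}"], simp, simp, simp add: doubleton_eq_iff)
    apply (rule ex1_lit[of "{{0,2},{1,4}}"], simp, simp, simp add: doubleton_eq_iff)
    apply (rule ex1_lit[of "{{1,2},{0,3}}"], simp, simp, simp add: doubleton_eq_iff)
    apply (rule ex1_lit[of "{{2,3},{0,4}}"], simp, simp, simp add: doubleton_eq_iff)
    apply (rule ex1_lit[of "{{1,2},{0,3}}"], simp, simp, simp add: doubleton_eq_iff)
    apply (rule ex1_lit[of "{{2,4},{1,3}}"], simp, simp, simp add: doubleton_eq_iff)
    apply (rule ex1_lit[of "{{0,2},{1,4}}"], simp, simp, simp add: doubleton_eq_iff)
    apply (rule ex1_lit[of "{{2,3},{0,4}}"], simp, simp, simp add: doubleton_eq_iff)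
    apply (rule ex1_lit[of "{{2,4},{1,3}}"], simp, simp, simp add: doubleton_eq_iff)
    apply (rule ex1_lit[of "{{0,1},{3,4}}"], simp, simp, simp add: doubleton_eq_iff)
    done
qed


lemma cneq: "y\<in>H \<Longrightarrow> y\<notin>H' \<Longrightarrow> z\<in>H \<Longrightarrow> z\<notin>A' \<Longrightarrow> {H,A} \<noteq> {H',A'}"
  by blast

lemma c12: "{H1,A1} \<noteq> {H2,A2}"
  by (rule cneq[of "{0,3}" _ _ "{0,1}"]) (simp_all add: H1_def H2_def A2_def doubleton_eq_iff)
lemma c13: "{H1,A1} \<noteq> {H3,A3}"
  by (rule cneq[of "{0,3}" _ _ "{0,1}"]) (simp_all add: H1_def H3_def A3_def doubleton_eq_iff)
lemma c23: "{H2,A2} \<noteq> {H3,A3}"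
  by (rule cneq[of "{0,4}" _ _ "{0,1}"]) (simp_all add: H2_def H3_def A3_def doubleton_eq_iff)

lemma card_PE: "card PE = 15"
  by (simp add: PE_def doubleton_eq_iff)

lemma PE_Kset: "PE \<subseteq> Kset PV"
  unfolding PE_def
  apply (simp only: insert_subset empty_subsetI simp_thms)
  apply (intro conjI)
  by (simp add: Kset_def PV_def doubleton_eq_iff)+

lemma q11_PE: "q11 \<subseteq> PE"
  unfolding q11_def PE_def by (simp add: doubleton_eq_iff)

lemma q12_PE: "q12 \<subseteq> PE"
  unfolding q12_def PE_def by (simp add: doubleton_eq_iff)

lemma q21_PE: "q21 \<subseteq> PE"
  unfolding q21_def PE_def by (simp add: doubleton_eq_iff)

lemma q22_PE: "q22 \<subseteq> PE"
  unfolding q22_def PE_def by (simp add: doubleton_eq_iff)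

lemma q31_PE: "q31 \<subseteq> PE"
  unfolding q31_def PE_def by (simp add: doubleton_eq_iff)

lemma q32_PE: "q32 \<subseteq> PE"
  unfolding q32_def PE_def by (simp add: doubleton_eq_iff)

lemma nbhd: "\<forall>e\<in>P. u\<in>e \<longrightarrow> e=a \<or> e=b \<or> e=c \<Longrightarrow> a \<in> P \<Longrightarrow> b \<in> P \<Longrightarrow> c \<in> P
  \<Longrightarrow> u \<in> a \<Longrightarrow> u \<in> b \<Longrightarrow> u \<in> c \<Longrightarrow> {e\<in>P. u \<in> e} = {a,b,c}"
  by blast

lemma regular_PE: "regular_graph PV PE"
  unfolding regular_graph_def
proof (intro exI[of _ 3])
  show "\<forall>u\<in>PV. card {e \<in> PE. u \<in> e} = 3"
    unfolding PV_def
    apply (simp only: ball_simps simp_thms)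
    apply (intro conjI)
    apply (subst nbhd[of PE "{0,1}" "{{0,1},{2,3}}" "{{0,1},{2,4}}" "{{0,1},{3,4}}"])
    apply (simp add: PE_def doubleton_eq_iff)
    apply (simp add: PE_def doubleton_eq_iff)
    apply (simp add: PE_def doubleton_eq_iff)
    apply (simp add: PE_def doubleton_eq_iff)
    apply simp
    apply simp
    apply simp
    apply (simp add: doubleton_eq_iff)
    apply (subst nbhd[of PE "{0,2}" "{{0,2},{1,3}}" "{{0,2},{1,4}}" "{{0,2},{3,4}}"])
    apply (simp add: PE_def doubleton_eq_iff)
    apply (simp add: PE_def doubleton_eq_iff)
    apply (simp add: PE_def doubleton_eq_iff)
    apply (simp add: PE_def doubleton_eq_iff)
    apply simp
    apply simp
    apply simp
    apply (simp add: doubleton_eq_iff)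
    apply (subst nbhd[of PE "{0,3}" "{{0,3},{1,2}}" "{{0,3},{1,4}}" "{{0,3},{2,4}}"])
    apply (simp add: PE_def doubleton_eq_iff)
    apply (simp add: PE_def doubleton_eq_iff)
    apply (simp add: PE_def doubleton_eq_iff)
    apply (simp add: PE_def doubleton_eq_iff)
    apply simp
    apply simp
    apply simp
    apply (simp add: doubleton_eq_iff)
    apply (subst nbhd[of PE "{0,4}" "{{0,4},{1,2}}" "{{0,4},{1,3}}" "{{0,4},{2,3}}"])
    apply (simp add: PE_def doubleton_eq_iff)
    apply (simp add: PE_def doubleton_eq_iff)
    apply (simp add: PE_def doubleton_eq_iff)
    apply (simp add: PE_def doubleton_eq_iff)
    apply simp
    apply simp
    apply simp
    apply (simp add: doubleton_eq_iff)
    apply (subst nbhd[of PE "{1,2}" "{{0,3},{1,2}}" "{{0,4},{1,2}}" "{{1,2},{3,4}}"])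
    apply (simp add: PE_def doubleton_eq_iff)
    apply (simp add: PE_def doubleton_eq_iff)
    apply (simp add: PE_def doubleton_eq_iff)
    apply (simp add: PE_def doubleton_eq_iff)
    apply simp
    apply simp
    apply simp
    apply (simp add: doubleton_eq_iff)
    apply (subst nbhd[of PE "{1,3}" "{{0,2},{1,3}}" "{{0,4},{1,3}}" "{{1,3},{2,4}}"])
    apply (simp add: PE_def doubleton_eq_iff)
    apply (simp add: PE_def doubleton_eq_iff)
    apply (simp add: PE_def doubleton_eq_iff)
    apply (simp add: PE_def doubleton_eq_iff)
    apply simp
    apply simp
    apply simp
    apply (simp add: doubleton_eq_iff)
    apply (subst nbhd[of PE "{1,4}" "{{0,2},{1,4}}" "{{0,3},{1,4}}" "{{1,4},{2,3}}"])
    apply (simp add: PE_def doubleton_eq_iff)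
    apply (simp add: PE_def doubleton_eq_iff)
    apply (simp add: PE_def doubleton_eq_iff)
    apply (simp add: PE_def doubleton_eq_iff)
    apply simp
    apply simp
    apply simp
    apply (simp add: doubleton_eq_iff)
    apply (subst nbhd[of PE "{2,3}" "{{0,1},{2,3}}" "{{0,4},{2,3}}" "{{1,4},{2,3}}"])
    apply (simp add: PE_def doubleton_eq_iff)
    apply (simp add: PE_def doubleton_eq_iff)
    apply (simp add: PE_def doubleton_eq_iff)
    apply (simp add: PE_def doubleton_eq_iff)
    apply simp
    apply simp
    apply simp
    apply (simp add: doubleton_eq_iff)
    apply (subst nbhd[of PE "{2,4}" "{{0,1},{2,4}}" "{{0,3},{2,4}}" "{{1,3},{2,4}}"])
    apply (simp add: PE_def doubleton_eq_iff)
    apply (simp add: PE_def doubleton_eq_iff)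
    apply (simp add: PE_def doubleton_eq_iff)
    apply (simp add: PE_def doubleton_eq_iff)
    apply simp
    apply simp
    apply simp
    apply (simp add: doubleton_eq_iff)
    apply (subst nbhd[of PE "{3,4}" "{{0,1},{3,4}}" "{{0,2},{3,4}}" "{{1,2},{3,4}}"])
    apply (simp add: PE_def doubleton_eq_iff)
    apply (simp add: PE_def doubleton_eq_iff)
    apply (simp add: PE_def doubleton_eq_iff)
    apply (simp add: PE_def doubleton_eq_iff)
    apply simp
    apply simp
    apply simp
    apply (simp add: doubleton_eq_iff)
    done
qed



abbreviation "C1 \<equiv> {H1,A1}"
abbreviation "C2 \<equiv> {H2,A2}"
abbreviation "C3 \<equiv> {H3,A3}"

definition vv :: "nat set vect" where
  "vv = (\<lambda>i. case i of Inl e \<Rightarrow> if e \<in> PE then 1 else 0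
                       | Inr c \<Rightarrow> if c \<in> {C1,C2,C3} then 1 else 0)"

lemma vv_Inl[simp]: "vv (Inl e) = (if e \<in> PE then 1 else 0)" by (simp add: vv_def)
lemma vv_Inr[simp]: "vv (Inr c) = (if c \<in> {C1,C2,C3} then 1 else 0)" by (simp add: vv_def)

lemma chiEc_Inl[simp]: "chiEc q c (Inl e) = (if e \<in> q then 1 else 0)" by (simp add: chiEc_def)
lemma chiEc_Inr[simp]: "chiEc q c (Inr d) = (if d = c then 1 else 0)" by (simp add: chiEc_def)

lemma PMin: "c \<in> Cset V \<Longrightarrow> perfect_matching V (B_edges c) q \<Longrightarrow> chiEc q c \<in> PM V"
  unfolding PM_def by blast

lemma two_vv_eq: "(\<lambda>i. 2 * vv i) = (\<lambda>i. chiEc q11 C1 i + (chiEc q12 C1 i + (chiEc q21 C2 i +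
   (chiEc q22 C2 i + (chiEc q31 C3 i + (chiEc q32 C3 i + 0))))))"
proof
  fix i show "2 * vv i = chiEc q11 C1 i + (chiEc q12 C1 i + (chiEc q21 C2 i +
   (chiEc q22 C2 i + (chiEc q31 C3 i + (chiEc q32 C3 i + 0)))))"
  proof (cases i)
    case (Inl e)
    show ?thesis
    proof (cases "e \<in> PE")
      case True
      have v1: "2 * vv (Inl e) = 2" using True by simp
      from True have disj: "e \<in> {{{0,1},{2,3}},{{0,1},{2,4}},{{0,1},{3,4}},
        {{0,2},{1,3}},{{0,2},{1,4}},{{0,2},{3,4}},
        {{0,3},{1,2}},{{0,3},{1,4}},{{0,3},{2,4}},
        {{0,4},{1,2}},{{0,4},{1,3}},{{0,4},{2,3}},
        {{1,2},{3,4}},{{1,3},{2,4}},{{1,4},{2,3}}}" unfolding PE_def .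
      show ?thesis unfolding Inl v1 using disj
        apply (simp only: insert_iff empty_iff simp_thms)
        apply (elim disjE)
        by (simp_all add: q11_def q12_def q21_def q22_def q31_def q32_def doubleton_eq_iff)
    next
      case False
      then have "e \<notin> q11" "e \<notin> q12" "e \<notin> q21" "e \<notin> q22" "e \<notin> q31" "e \<notin> q32"
        using q11_PE q12_PE q21_PE q22_PE q31_PE q32_PE by blast+
      then show ?thesis using False Inl by simp
    qed
  next
    case (Inr c)
    then show ?thesis using c12 c13 c23 by auto
  qed
qed

lemma two_vv: "(\<lambda>i. 2 * vv i) \<in> Ncomb (PM PV)"
  unfolding two_vv_eq
  by (intro Ncomb.add Ncomb.zero PMin c1 c2 c3 pm_q11 pm_q12 pm_q21 pm_q22 pm_q31 pm_q32)

lemma finite_PV: "finite PV" by (simp add: PV_def)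

lemma finite_K: "finite V \<Longrightarrow> finite (Kset V)"
proof -
  assume f: "finite V"
  have "Kset V \<subseteq> Pow V" by (auto simp: Kset_def)
  then show "finite (Kset V)" using f by (meson finite_Pow_iff finite_subset)
qed

lemma finite_C: "finite V \<Longrightarrow> finite (Cset V)"
proof -
  assume f: "finite V"
  have "Cset V \<subseteq> Pow (Pow V)" by (auto simp: Cset_def)
  then show "finite (Cset V)" using f by (meson finite_Pow_iff finite_subset)
qed

lemma vv_vecs: "vv \<in> vecs PV"
  unfolding vecs_def
proof (intro CollectI allI impI)
  fix x assume x: "x \<notin> Inl ` Kset PV \<union> Inr ` Cset PV"
  show "vv x = 0"
  proof (cases x)
    case (Inl e) then show ?thesis using x PE_Kset by auto
  next
    case (Inr c) then show ?thesis using x c1 c2 c3 by auto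
  qed
qed

lemma vv_Nbar: "vv \<in> Nbar PV (PM PV)"
  unfolding Nbar_def using vv_vecs two_vv by (intro CollectI conjI exI[of _ 2]) auto

lemma sum_ind: "finite A \<Longrightarrow> B \<subseteq> A \<Longrightarrow> (\<Sum>x\<in>A. if x \<in> B then 1 else 0::nat) = card B"
proof -
  assume "finite A" "B \<subseteq> A"
  then have "(\<Sum>x\<in>A. if x \<in> B then 1 else 0::nat) = (\<Sum>x\<in>{x\<in>A. x\<in>B}. 1)"
    using sum.inter_filter[of A "\<lambda>_. 1::nat" "\<lambda>x. x\<in>B"] by simp
  also have "{x\<in>A. x\<in>B} = B" using \<open>B \<subseteq> A\<close> by blast
  finally show ?thesis by simp
qed

lemma card_C123: "card {C1,C2,C3} = 3"
  using c12 c13 c23 by simp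

lemma vv_problem: "vv \<in> problem PV"
  unfolding problem_def
proof (intro CollectI conjI)
  show "vv \<in> vecs PV" by (rule vv_vecs)
  show "\<forall>e\<in>Kset PV. vv (Inl e) \<le> 1" by simp
  have "Eset PV vv = PE" unfolding Eset_def using PE_Kset by auto
  then show "regular_graph PV (Eset PV vv)" using regular_PE by simp
  have s1: "(\<Sum>c\<in>Cset PV. vv (Inr c)) = 3"
    using sum_ind[OF finite_C[OF finite_PV], of "{C1,C2,C3}"] c1 c2 c3 card_C123 by simp
  have s2: "(\<Sum>e\<in>Kset PV. vv (Inl e)) = 15"
    using sum_ind[OF finite_K[OF finite_PV] PE_Kset] card_PE by simp
  show "card PV div 2 * (\<Sum>c\<in>Cset PV. vv (Inr c)) = (\<Sum>e\<in>Kset PV. vv (Inl e))"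
    using s1 s2 card_PV by simp
qed


lemma Eset_vv: "Eset PV vv = PE" unfolding Eset_def using PE_Kset by auto

lemma Ncomb_pos: "y \<in> Ncomb M \<Longrightarrow> y \<noteq> (\<lambda>_. 0) \<Longrightarrow> \<exists>x\<in>M. \<forall>i. 0 < x i \<longrightarrow> 0 < y i"
  by (erule Ncomb.cases) auto

lemma Nbar_pos: assumes "a \<in> Nbar V M" "a \<noteq> (\<lambda>_. 0)" shows "\<exists>x\<in>M. \<forall>i. 0 < x i \<longrightarrow> 0 < a i"
proof -
  obtain k where k: "k \<ge> 1" "(\<lambda>i. k * a i) \<in> Ncomb M" using assms(1) by (auto simp: Nbar_def)
  obtain j where "a j \<noteq> 0" using assms(2) by auto
  then have "(\<lambda>i. k * a i) \<noteq> (\<lambda>_. 0)" using k(1) by (metis mult_is_0 not_one_le_zero)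
  from Ncomb_pos[OF k(2) this] obtain x where "x \<in> M" "\<forall>i. 0 < x i \<longrightarrow> 0 < k * a i" by blast
  then show ?thesis by auto
qed

lemma PM_PV_elim: "x \<in> PM PV \<Longrightarrow> \<exists>q c. x = chiEc q c \<and> (\<forall>u\<in>PV. \<exists>!e. e\<in>q \<and> u\<in>e)"
  unfolding PM_def perfect_matching_def by blast

lemma contra:
  fixes a b x y :: "nat set vect"
  assumes s: "\<forall>e. a (Inl e) + b (Inl e) = (if e\<in>PE then 1 else 0)"
    and x: "x \<in> PM PV" and y: "y \<in> PM PV"
    and xa: "\<forall>i. 0 < x i \<longrightarrow> 0 < a i" and yb: "\<forall>i. 0 < y i \<longrightarrow> 0 < b i"
  shows False
proof -
  obtain q c where q: "x = chiEc q c" "\<forall>u\<in>PV. \<exists>!e. e\<in>q \<and> u\<in>e" using PM_PV_elim[OF x] by blast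
  obtain q' c' where q': "y = chiEc q' c'" "\<forall>u\<in>PV. \<exists>!e. e\<in>q' \<and> u\<in>e" using PM_PV_elim[OF y] by blast
  have aq: "0 < a (Inl e)" if "e \<in> q" for e using xa[rule_format, of "Inl e"] q(1) that by simp
  have bq: "0 < b (Inl e)" if "e \<in> q'" for e using yb[rule_format, of "Inl e"] q'(1) that by simp
  have "q \<subseteq> PE"
  proof
    fix e assume e: "e \<in> q"
    show "e \<in> PE"
    proof (rule ccontr)
      assume "e \<notin> PE"
      then have "a (Inl e) + b (Inl e) = 0" using s[rule_format, of e] by simp
      then show False using aq[OF e] by simp
    qed
  qed
  moreover have "q' \<subseteq> PE"
  proof
    fix e assume e: "e \<in> q'"
    show "e \<in> PE"
    proof (rule ccontr)
      assume "e \<notin> PE"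
      then have "a (Inl e) + b (Inl e) = 0" using s[rule_format, of e] by simp
      then show False using bq[OF e] by simp
    qed
  qed
  moreover have "q \<inter> q' = {}"
  proof (rule ccontr)
    assume "q \<inter> q' \<noteq> {}" then obtain e where "e \<in> q" "e \<in> q'" by blast
    then have "0 < a (Inl e)" "0 < b (Inl e)" using aq bq by auto
    moreover have "a (Inl e) + b (Inl e) \<le> 1" using s[rule_format, of e] by simp
    ultimately show False by simp
  qed
  ultimately show False using key_PE q(2) q'(2) by blast
qed

lemma vv_nz: "vv \<noteq> (\<lambda>_. 0)"
proof
  assume h: "vv = (\<lambda>_. 0)"
  have "vv (Inr C1) = 1" by simp
  then show False using fun_cong[OF h, of "Inr C1"] by (simp del: vv_Inr)
qed

lemma vv_Irr: "vv \<in> Irr (Nbar PV (PM PV))"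
  unfolding Irr_def
proof (intro CollectI conjI ballI impI vv_Nbar vv_nz)
  fix a b assume ab: "a \<in> Nbar PV (PM PV)" "b \<in> Nbar PV (PM PV)" "vv = (\<lambda>i. a i + b i)"
  show "a = (\<lambda>_. 0) \<or> b = (\<lambda>_. 0)"
  proof (rule ccontr)
    assume "\<not> (a = (\<lambda>_. 0) \<or> b = (\<lambda>_. 0))"
    then have "a \<noteq> (\<lambda>_. 0)" "b \<noteq> (\<lambda>_. 0)" by auto
    from Nbar_pos[OF ab(1) this(1)] Nbar_pos[OF ab(2) this(2)]
    obtain x y where xy: "x \<in> PM PV" "\<forall>i. 0 < x i \<longrightarrow> 0 < a i" "y \<in> PM PV" "\<forall>i. 0 < y i \<longrightarrow> 0 < b i"
      by blast
    have s: "\<forall>e. a (Inl e) + b (Inl e) = (if e\<in>PE then 1 else 0)"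
    proof
      fix e have "vv (Inl e) = a (Inl e) + b (Inl e)" by (rule fun_cong[OF ab(3)])
      then show "a (Inl e) + b (Inl e) = (if e\<in>PE then 1 else 0)" unfolding vv_Inl by (rule sym)
    qed
    show False by (rule contra[OF s xy(1) xy(3) xy(2) xy(4)])
  qed
qed

lemma vv_notNcomb: "vv \<notin> Ncomb (PM PV)"
proof
  assume "vv \<in> Ncomb (PM PV)"
  then show False
  proof cases
    case zero then show False using vv_nz by simp
  next
    case (add x y)
    note eq = add(1) and xP = add(2) and yN = add(3)
    obtain q c where q: "x = chiEc q c" using PM_PV_elim[OF xP] by blast
    obtain C where C: "C = C1 \<or> C = C2" "C \<noteq> c"
    proof (cases "c = C1")
      case True then show ?thesis using that[of C2] c12 by blast
    next
      case False then show ?thesis using that[of C1] by blast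
    qed
    have vC: "vv (Inr C) = 1" using C(1) by (auto simp del: vv_Inl)
    have xC: "x (Inr C) = 0" using q C(2) by simp
    have "y (Inr C) = 1" using fun_cong[OF eq, of "Inr C"] vC xC by simp
    then have "y \<noteq> (\<lambda>_. 0)" by auto
    from Ncomb_pos[OF yN this] obtain y' where y': "y' \<in> PM PV" "\<forall>i. 0 < y' i \<longrightarrow> 0 < y i" by blast
    have s: "\<forall>e. x (Inl e) + y (Inl e) = (if e\<in>PE then 1 else 0)"
    proof
      fix e have "vv (Inl e) = x (Inl e) + y (Inl e)" by (rule fun_cong[OF eq])
      then show "x (Inl e) + y (Inl e) = (if e\<in>PE then 1 else 0)" unfolding vv_Inl by (rule sym)
    qed
    have xx: "\<forall>i. 0 < x i \<longrightarrow> 0 < x i" by blast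
    show False by (rule contra[OF s xP y'(1) xx y'(2)])
  qed
qed

lemma vv_notPM: "vv \<notin> PM PV"
proof
  assume "vv \<in> PM PV"
  then obtain q c where eq: "vv = chiEc q c" using PM_PV_elim by blast
  have a1: "vv (Inr C1) = 1" "vv (Inr C2) = 1" by simp_all
  have a2: "vv (Inr C1) = chiEc q c (Inr C1)" "vv (Inr C2) = chiEc q c (Inr C2)"
    by (simp_all only: eq)
  have a3: "chiEc q c (Inr C1) = (if C1 = c then 1 else 0)" "chiEc q c (Inr C2) = (if C2 = c then 1 else 0)"
    by (rule chiEc_Inr)+
  have "C1 = c" using a1(1) a2(1) a3(1) by (metis zero_neq_one)
  moreover have "C2 = c" using a1(2) a2(2) a3(2) by (metis zero_neq_one)
  ultimately show False using c12 by simp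
qed

theorem mainTheorem13:
  shows "\<not> B_factorizable petersenV petersenE
    \<and> (\<exists>v. v \<in> Nbar petersenV (PM petersenV) \<and> v \<in> problem petersenV
          \<and> Eset petersenV v = petersenE
          \<and> (\<lambda>i. 2 * v i) \<in> Ncomb (PM petersenV)
          \<and> additional_generator petersenV v)"
  unfolding petersenV_eq petersenE_eq
proof
  show "\<not> B_factorizable PV PE"
    unfolding B_factorizable_def
  proof
    assume h: "\<forall>v\<in>Nbar PV (PM PV). (\<forall>e\<in>Kset PV. v (Inl e) = (if e \<in> PE then 1 else 0)) \<longrightarrow> v \<in> Ncomb (PM PV)"
    have "\<forall>e\<in>Kset PV. vv (Inl e) = (if e \<in> PE then 1 else 0)" by simp
    then show False using h vv_Nbar vv_notNcomb by blast
  qed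
  have "additional_generator PV vv"
    unfolding additional_generator_def
    using min_gen_Irr[OF finite_PV] min_gen_contains vv_Irr vv_notPM by blast
  then show "\<exists>v. v \<in> Nbar PV (PM PV) \<and> v \<in> problem PV \<and> Eset PV v = PE
          \<and> (\<lambda>i. 2 * v i) \<in> Ncomb (PM PV) \<and> additional_generator PV v"
    using vv_Nbar vv_problem Eset_vv two_vv by blast
qed

end
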